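(* Let $n\ge 0$ be an integer, $\alpha=-\frac{1}{2n+2}$, and for $k\in\mathbb{Z}_+$ let $$v_k(t)=e^{-\frac{t^{2n+2}}{2n+2}}L^{(\alpha)}_{k}\!\left(\frac{t^{2n+2}}{n+1}\right),$$ with the convention $v_\ell\equiv0$ for $\ell<0$. Then $$t\frac{d}{dt}v_k(t)=(n+1)\big((k+1)v_{k+1}(t)-(1+\alpha)v_k(t)-(k+\alpha)v_{k-1}(t)\big),\quad k\ge1,$$ $$t\frac{d}{dt}v_0(t)=(n+1)\big(v_1(t)-(1+\alpha)v_0(t)\big).$$ More generally, for all $i,k\in\mathbb{Z}_+$ there are constants $\delta^{k,i}_j$, $j=-i,\dots,i$, with $$\Big(t\frac{d}{dt}\Big)^{i}v_k(t)=\sum_{j=-i}^{i}\delta^{k,i}_{j}\,v_{k+j}(t)=\sum_{j=\max\{k-i,0\}}^{k+i}\delta^{k,i}_{j-k}v_j(t),$$ where (i) $\delta^{k,i}_i=(n+1)^i\frac{(k+i)!}{k!}$, and (ii) $|\delta^{k,i}_j|\le C^{i}\frac{(k+i)!}{k!}$ for $j=-i,\dots,i$, with $C>0$ a suitable constant independent of $i,j,k$.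
   Context: $L^{(a)}_k(s)=\sum_{i=0}^{k}(-1)^i\binom{k+a}{k-i}\frac{s^i}{i!}$ denotes the generalized Laguerre polynomial of degree $k$ and parameter $a$. *)

theory Defs
  imports "HOL-Analysis.Analysis"
begin

definition laguerre :: "nat \<Rightarrow> real \<Rightarrow> real \<Rightarrow> real" where
  "laguerre k a s = (\<Sum>i=0..k. (-1)^i * ((real k + a) gchoose (k - i)) * s^i / fact i)"

definition lag_alpha :: "nat \<Rightarrow> real" where
  "lag_alpha n = - 1 / (2 * real n + 2)"

definition vfun :: "nat \<Rightarrow> int \<Rightarrow> real \<Rightarrow> real" where
  "vfun n k t = (if k < 0 then 0 else
      exp (- (t ^ (2*n+2)) / (2 * real n + 2)) *
      laguerre (nat k) (lag_alpha n) (t ^ (2*n+2) / (real n + 1)))"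

definition euler_op :: "(real \<Rightarrow> real) \<Rightarrow> real \<Rightarrow> real" where
  "euler_op f = (\<lambda>t. t * deriv f t)"

end

theory Submission imports Defs begin

definition cf :: "real \<Rightarrow> nat \<Rightarrow> nat \<Rightarrow> real" where
  "cf a k i = (if i \<le> k then (-1)^i * ((real k + a) gchoose (k - i)) / fact i else 0)"

lemma coef_norm:
  fixes a :: real and i d :: nat
  defines "X \<equiv> (real (i+d) + a) gchoose d"
  shows "2 * real i * X + real i * ((real (i+d) + a) gchoose (Suc d))
     = (real (i+d) + 1) * ((real (Suc (i+d)) + a) gchoose (Suc d)) - (1+a) * X - real d * X"
proof -
  have Y1: "real (Suc d) * ((real (Suc (i+d)) + a) gchoose (Suc d)) = (real (i+d) + 1 + a) * X"
    using gbinomial_absorption[of d "real (Suc (i+d)) + a"] unfolding X_def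
    by (simp add: algebra_simps)
  have Y2: "real (Suc d) * ((real (i+d) + a) gchoose (Suc d)) = (real i + a) * X"
    using gbinomial_mult_1[of "real (i+d) + a" d] unfolding X_def
    by (simp add: algebra_simps)
  have "real (Suc d) * (2 * real i * X + real i * ((real (i+d) + a) gchoose (Suc d)))
     = real (Suc d) * ((real (i+d) + 1) * ((real (Suc (i+d)) + a) gchoose (Suc d)) - (1+a) * X - real d * X)"
  proof -
    have "real (Suc d) * (2 * real i * X + real i * ((real (i+d) + a) gchoose (Suc d)))
        = 2 * real i * real (Suc d) * X + real i * (real i + a) * X"
      using Y2 by (simp add: algebra_simps)
    also have "\<dots> = (real (i+d) + 1) * ((real (i+d) + 1 + a) * X) - real (Suc d) * (1+a) * X - real (Suc d) * real d * X"
      by (simp add: algebra_simps)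
    also have "\<dots> = real (Suc d) * ((real (i+d) + 1) * ((real (Suc (i+d)) + a) gchoose (Suc d)) - (1+a) * X - real d * X)"
      using Y1 by (simp add: algebra_simps)
    finally show ?thesis .
  qed
  then show ?thesis by (metis mult_cancel_left of_nat_eq_0_iff nat.distinct(1))
qed

lemma coef_id:
  fixes a :: real and i k :: nat
  shows "2 * real i * cf a k i - (if i \<ge> 1 then cf a k (i-1) else 0)
     = (real k + 1) * cf a (k+1) i - (1+a) * cf a k i - (if k \<ge> 1 then (real k + a) * cf a (k-1) i else 0)"
proof (cases "i \<le> k")
  case True
  then obtain d where kd: "k = i + d" using le_Suc_ex by blast
  define X where "X = (real (i+d) + a) gchoose d"
  define Y1 where "Y1 = (real (Suc (i+d)) + a) gchoose (Suc d)"
  define Y2 where "Y2 = (real (i+d) + a) gchoose (Suc d)"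
  define s where "s = (-1::real)^i / fact i"
  have c0: "cf a k i = s * X" unfolding cf_def s_def X_def kd by simp
  have c1: "cf a (k+1) i = s * Y1" unfolding cf_def s_def Y1_def kd
    by (simp add: Suc_diff_le)
  have c2: "(if i \<ge> 1 then cf a k (i-1) else 0) = - s * real i * Y2"
  proof (cases i)
    case 0 then show ?thesis by simp
  next
    case (Suc i')
    have "k - i' = Suc d" using kd Suc by simp
    then have "cf a k (i-1) = (-1)^i' * Y2 / fact i'" unfolding cf_def Y2_def kd Suc by simp
    moreover have "(fact (Suc i') :: real) = real (Suc i') * fact i'" by simp
    ultimately show ?thesis unfolding s_def Suc
      by (simp del: of_nat_Suc fact_Suc add: field_simps)
  qed
  have c3: "(if k \<ge> 1 then (real k + a) * cf a (k-1) i else 0) = s * real d * X"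
  proof (cases d)
    case 0 then show ?thesis using kd by (auto simp add: cf_def)
  next
    case (Suc d')
    have "k - 1 - i = d'" using kd Suc by simp
    then have e: "cf a (k-1) i = s * ((real (k-1) + a) gchoose d')"
      unfolding cf_def s_def using kd Suc by simp
    have "real (Suc d') * ((real k + a) gchoose Suc d') = (real k + a) * ((real k + a - 1) gchoose d')"
      by (rule gbinomial_absorption)
    moreover have "real k + a - 1 = real (k-1) + a" using kd Suc by simp
    ultimately have "(real k + a) * ((real (k-1) + a) gchoose d') = real d * X"
      unfolding X_def using kd Suc by (simp add: add.assoc)
    then show ?thesis using e kd Suc by (simp add: algebra_simps)
  qed
  have N: "2 * real i * X + real i * Y2 = (real (i+d) + 1) * Y1 - (1+a) * X - real d * X"
    unfolding X_def Y1_def Y2_def by (rule coef_norm)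
  show ?thesis unfolding c0 c1 c2 c3
  proof -
    have "2 * real i * (s * X) - - s * real i * Y2 = s * (2 * real i * X + real i * Y2)"
      by (simp add: algebra_simps)
    also have "\<dots> = s * ((real (i+d) + 1) * Y1 - (1+a) * X - real d * X)" using N by simp
    also have "\<dots> = (real k + 1) * (s * Y1) - (1 + a) * (s * X) - s * real d * X"
      using kd by (simp add: algebra_simps)
    finally show "2 * real i * (s * X) - - s * real i * Y2 = (real k + 1) * (s * Y1) - (1 + a) * (s * X) - s * real d * X" .
  qed
next
  case False
  show ?thesis
  proof (cases "i = k + 1")
    case True
    have f: "fact (k+1) = (real k + 1) * (fact k :: real)" by simp
    have e1: "cf a k i = 0" "cf a (k-1) i = 0" using True by (auto simp: cf_def)
    have e2: "cf a k (i-1) = (-1)^k / fact k" using True by (simp add: cf_def)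
    have e3: "cf a (k+1) i = (-1)^(k+1) / fact (k+1)" using True by (simp add: cf_def)
    have "(real k + 1) * ((-1)^(k+1) / fact (k+1)) = - ((-1::real)^k / fact k)"
    proof -
      have "(real k + 1) * ((-1)^(k+1) / ((real k + 1) * fact k)) = (-1::real)^(k+1) / fact k"
        by (metis (no_types) divide_divide_eq_left' nonzero_mult_div_cancel_left
             of_nat_Suc of_nat_neq_0 add.commute times_divide_eq_right mult.commute)
      then show ?thesis unfolding f by simp
    qed
    then show ?thesis using True e1 e2 e3 by simp
  next
    case False
    with \<open>\<not> i \<le> k\<close> show ?thesis by (auto simp add: cf_def)
  qed
qed

lemma lag_cf: "k \<le> M \<Longrightarrow> laguerre k a s = (\<Sum>i\<le>M. cf a k i * s^i)"
proof -
  assume kM: "k \<le> M"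
  have "laguerre k a s = (\<Sum>i\<in>{0..k}. cf a k i * s^i)"
    unfolding laguerre_def cf_def by (intro sum.cong) auto
  also have "\<dots> = (\<Sum>i\<le>M. cf a k i * s^i)"
    by (rule sum.mono_neutral_left) (use kM in \<open>auto simp: cf_def\<close>)
  finally show ?thesis .
qed

lemma poly_id:
  "(\<Sum>i\<le>k+2. cf a k i * (2 * real i * s^i - s^(i+1)))
    = (real k + 1) * laguerre (k+1) a s - (1+a) * laguerre k a s
      - (if k \<ge> 1 then (real k + a) * laguerre (k-1) a s else 0)"
proof -
  define g where "g i = (if i \<ge> 1 then cf a k (i-1) else 0)" for i
  have sh: "(\<Sum>i\<le>k+2. g i * s^i) = (\<Sum>i\<le>k+2. cf a k i * s^(i+1))"
  proof -
    have "(\<Sum>i\<le>Suc (k+2). g i * s^i) = (\<Sum>i\<le>k+2. g i * s^i)"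
      by (simp add: g_def cf_def)
    moreover have "(\<Sum>i\<le>Suc (k+2). g i * s^i) = g 0 * s^0 + (\<Sum>i\<le>k+2. g (Suc i) * s^(Suc i))"
      by (rule sum.atMost_Suc_shift)
    ultimately show ?thesis by (simp add: g_def)
  qed
  have "(real k + 1) * laguerre (k+1) a s - (1+a) * laguerre k a s
      - (if k \<ge> 1 then (real k + a) * laguerre (k-1) a s else 0)
      = (\<Sum>i\<le>k+2. ((real k + 1) * cf a (k+1) i - (1+a) * cf a k i
          - (if k \<ge> 1 then (real k + a) * cf a (k-1) i else 0)) * s^i)"
    by (cases "k \<ge> 1") (simp_all add: lag_cf[of _ "k+2"] sum_distrib_left sum_subtractf sum.distrib algebra_simps)
  also have "\<dots> = (\<Sum>i\<le>k+2. (2 * real i * cf a k i - g i) * s^i)"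
    unfolding g_def by (intro sum.cong refl) (simp only: coef_id)
  also have "\<dots> = (\<Sum>i\<le>k+2. cf a k i * (2 * real i * s^i - s^(i+1)))"
    using sh by (simp add: sum_subtractf algebra_simps sum_distrib_left)
  finally show ?thesis by simp
qed

lemma pow_pred_mult: "real i * x^(i - Suc 0) * x = real i * (x::real)^i"
  by (cases i) auto

lemma v_poly_deriv:
  fixes n M :: nat and c :: "nat \<Rightarrow> real" and t :: real
  defines "f \<equiv> (\<lambda>t. exp (- (t^(2*n+2)) / (2*real n+2)) * (\<Sum>i\<le>M. c i * (t^(2*n+2)/(real n+1))^i))"
  shows "\<exists>D. (f has_real_derivative D) (at t) \<and>
     t * D = (real n + 1) * (exp (- (t^(2*n+2)) / (2*real n+2)) *
         (\<Sum>i\<le>M. c i * (2 * real i * (t^(2*n+2)/(real n+1))^i - (t^(2*n+2)/(real n+1))^(i+1))))"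
proof -
  define p where "p = 2*n+2"
  define N where "N = real n + 1"
  define S where "S = t^p / N"
  define E where "E = exp (- (t^p) / (2*real n+2))"
  have Np: "N > 0" unfolding N_def by simp
  have p2: "real p = 2 * N" "2 * real n + 2 = 2 * N" unfolding p_def N_def by simp_all
  have tp: "t * t^(p - Suc 0) = t^p" unfolding p_def by simp
  have dpow: "((\<lambda>t. t^p) has_real_derivative real p * t^(p - Suc 0)) (at t)"
    by (rule DERIV_pow)
  have dS: "((\<lambda>t. t^p / N) has_real_derivative real p * t^(p - Suc 0) / N) (at t)"
    using DERIV_cdivide[OF dpow, of N] by simp
  have dE: "((\<lambda>t. exp (- (t^p) / (2*real n+2))) has_real_derivative
      E * (- (real p * t^(p - Suc 0)) / (2*real n+2))) (at t)"
  proof -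
    have "((\<lambda>t. - (t^p) / (2*real n+2)) has_real_derivative - (real p * t^(p - Suc 0)) / (2*real n+2)) (at t)"
      using DERIV_cdivide[OF DERIV_minus[OF dpow], of "2*real n+2"] by simp
    from DERIV_chain2[OF DERIV_exp this] show ?thesis unfolding E_def by simp
  qed
  have dQ: "((\<lambda>t. \<Sum>i\<le>M. c i * (t^p/N)^i) has_real_derivative
      (\<Sum>i\<le>M. c i * (real i * ((real p * t^(p - Suc 0) / N) * S^(i - Suc 0))))) (at t)"
    unfolding S_def
    by (intro DERIV_sum DERIV_cmult DERIV_power dS)
  define Q where "Q = (\<Sum>i\<le>M. c i * S^i)"
  define Q' where "Q' = (\<Sum>i\<le>M. c i * (real i * ((real p * t^(p - Suc 0) / N) * S^(i - Suc 0))))"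
  have dF: "(f has_real_derivative (E * (- (real p * t^(p - Suc 0)) / (2*real n+2))) * Q + Q' * E) (at t)"
    unfolding f_def using DERIV_mult[OF dE dQ] unfolding p_def[symmetric] N_def[symmetric] Q_def Q'_def S_def E_def
    by simp
  have tQ': "t * Q' = 2 * N * (\<Sum>i\<le>M. c i * (real i * S^i))"
  proof -
    have "t * Q' = (\<Sum>i\<le>M. c i * (real i * (real p * (t * t^(p - Suc 0)) / N * S^(i - Suc 0))))"
      unfolding Q'_def by (simp add: sum_distrib_left algebra_simps)
    also have "\<dots> = (\<Sum>i\<le>M. 2 * N * (c i * (real i * S^(i - Suc 0) * S)))"
      unfolding tp p2 S_def by (intro sum.cong refl) (simp add: algebra_simps)
    also have "\<dots> = 2 * N * (\<Sum>i\<le>M. c i * (real i * S^i))"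
      by (simp add: pow_pred_mult sum_distrib_left)
    finally show ?thesis .
  qed
  have tE: "t * (E * (- (real p * t^(p - Suc 0)) / (2*real n+2))) = - N * E * S"
  proof -
    have "t * (E * (- (real p * t^(p - Suc 0)) / (2*real n+2))) = - E * (real p * (t * t^(p - Suc 0))) / (2 * N)"
      unfolding p2 by (simp add: algebra_simps)
    also have "\<dots> = - N * E * S" unfolding tp p2 S_def using Np by (simp add: field_simps)
    finally show ?thesis .
  qed
  have "t * ((E * (- (real p * t^(p - Suc 0)) / (2*real n+2))) * Q + Q' * E)
      = N * (E * (\<Sum>i\<le>M. c i * (2 * real i * S^i - S^(i+1))))"
  proof -
    have "t * ((E * (- (real p * t^(p - Suc 0)) / (2*real n+2))) * Q + Q' * E)
        = (t * (E * (- (real p * t^(p - Suc 0)) / (2*real n+2)))) * Q + (t * Q') * E"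
      by (simp add: algebra_simps)
    also have "\<dots> = N * (E * (2 * (\<Sum>i\<le>M. c i * (real i * S^i)) - S * Q))"
      unfolding tE tQ' by (simp add: algebra_simps)
    also have "\<dots> = N * (E * (\<Sum>i\<le>M. c i * (2 * real i * S^i - S^(i+1))))"
      unfolding Q_def by (simp add: sum_distrib_left sum_subtractf algebra_simps)
    finally show ?thesis .
  qed
  then show ?thesis using dF unfolding N_def S_def E_def p_def by blast
qed

lemma v_rec:
  fixes m :: int and t :: real
  shows "\<exists>D. (vfun n m has_real_derivative D) (at t) \<and>
     t * D = (real n + 1) * ((real_of_int m + 1) * vfun n (m+1) t - (1 + lag_alpha n) * vfun n m t
              - (real_of_int m + lag_alpha n) * vfun n (m-1) t)"
proof (cases "m < 0")
  case True
  have z: "vfun n m = (\<lambda>_. 0)" using True by (simp add: vfun_def fun_eq_iff)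
  have "(real_of_int m + 1) * vfun n (m+1) t = 0"
    using True by (cases "m = -1") (auto simp: vfun_def)
  moreover have "vfun n (m-1) t = 0" using True by (simp add: vfun_def)
  moreover have "vfun n m t = 0" using z by simp
  ultimately show ?thesis unfolding z by (intro exI[of _ 0]) simp
next
  case False
  then obtain k where mk: "m = int k" by (metis nonneg_int_cases not_less)
  define a where "a = lag_alpha n"
  define S where "S = t^(2*n+2)/(real n+1)"
  define E where "E = exp (- (t^(2*n+2)) / (2*real n+2))"
  have fv: "vfun n m = (\<lambda>t. exp (- (t^(2*n+2)) / (2*real n+2)) * (\<Sum>i\<le>k+2. cf a k i * (t^(2*n+2)/(real n+1))^i))"
    unfolding mk vfun_def a_def by (simp add: fun_eq_iff lag_cf[of k "k+2"])
  obtain D where D: "(vfun n m has_real_derivative D) (at t)"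
     "t * D = (real n + 1) * (E * (\<Sum>i\<le>k+2. cf a k i * (2 * real i * S^i - S^(i+1))))"
    using v_poly_deriv[where n=n and M="k+2" and c="cf a k" and t=t] unfolding fv[symmetric] E_def S_def by blast
  have v0: "vfun n m t = E * laguerre k a S" unfolding mk vfun_def E_def S_def a_def by simp
  have v1: "vfun n (m+1) t = E * laguerre (k+1) a S" unfolding mk vfun_def E_def S_def a_def
    by (simp add: nat_add_distrib)
  have v2: "vfun n (m-1) t = (if k \<ge> 1 then E * laguerre (k-1) a S else 0)"
    unfolding mk vfun_def E_def S_def a_def by (auto simp: nat_diff_distrib)
  have "t * D = (real n + 1) * ((real_of_int m + 1) * vfun n (m+1) t - (1 + a) * vfun n m t
              - (real_of_int m + a) * vfun n (m-1) t)"
  proof -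
    have rm: "real_of_int m = real k" using mk by simp
    show ?thesis unfolding D(2) poly_id v0 v1 v2 rm
      by (cases "k \<ge> 1") (simp_all add: algebra_simps)
  qed
  then show ?thesis using D(1) unfolding a_def by blast
qed

lemma v_has_deriv: "(vfun n m has_real_derivative deriv (vfun n m) t) (at t)"
  using v_rec[of n m t] DERIV_imp_deriv by fastforce

lemma v_euler: "euler_op (vfun n m) t = (real n + 1) * ((real_of_int m + 1) * vfun n (m+1) t
   - (1 + lag_alpha n) * vfun n m t - (real_of_int m + lag_alpha n) * vfun n (m-1) t)"
  using v_rec[of n m t] DERIV_imp_deriv unfolding euler_op_def by fastforce

fun dl :: "nat \<Rightarrow> nat \<Rightarrow> nat \<Rightarrow> int \<Rightarrow> real" where
  "dl n k 0 j = (if j = 0 then 1 else 0)"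
| "dl n k (Suc i) j = (real n + 1) * (real_of_int (int k + j) * dl n k i (j-1)
     - (1 + lag_alpha n) * dl n k i j - (real_of_int (int k + j + 1) + lag_alpha n) * dl n k i (j+1))"

lemma dl_supp: "j \<notin> {- int i..int i} \<Longrightarrow> dl n k i j = 0"
proof (induction i arbitrary: j)
  case 0 then show ?case by simp
next
  case (Suc i)
  have "j - 1 \<notin> {- int i..int i}" "j \<notin> {- int i..int i}" "j + 1 \<notin> {- int i..int i}"
    using Suc.prems by auto
  then show ?case using Suc.IH by simp
qed

lemma dl_top: "dl n k i (int i) = (real n + 1)^i * fact (k+i) / fact k"
proof (induction i)
  case 0 then show ?case by simp
next
  case (Suc i)
  have z: "dl n k i (int (Suc i)) = 0" "dl n k i (int (Suc i) + 1) = 0" by (auto intro: dl_supp)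
  have "dl n k (Suc i) (int (Suc i)) = (real n + 1) * (real (k + Suc i) * dl n k i (int i))"
    using z by simp
  also have "\<dots> = (real n + 1)^(Suc i) * fact (k + Suc i) / fact k"
    unfolding Suc.IH by (simp add: algebra_simps)
  finally show ?case .
qed

lemma alpha_bounds: "\<bar>lag_alpha n\<bar> \<le> 1/2" "\<bar>1 + lag_alpha n\<bar> \<le> 1"
  unfolding lag_alpha_def by (auto simp: field_simps abs_if)

lemma dl_bound: "\<bar>dl n k i j\<bar> \<le> (3 * (real n + 1))^i * fact (k+i) / fact k"
proof (induction i arbitrary: j)
  case 0 then show ?case by simp
next
  case (Suc i)
  define B where "B = (3 * (real n + 1))^i * fact (k+i) / fact k"
  have B0: "B \<ge> 0" unfolding B_def by simp
  have t1: "\<bar>real_of_int (int k + j) * dl n k i (j-1)\<bar> \<le> real (k+i+1) * B"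
  proof (cases "j - 1 \<in> {- int i..int i}")
    case True
    then have "\<bar>real_of_int (int k + j)\<bar> \<le> real (k+i+1)" by auto
    then show ?thesis unfolding abs_mult B_def
      by (intro mult_mono Suc.IH) auto
  next
    case False then show ?thesis using dl_supp[OF False] B0 by simp
  qed
  have t2: "\<bar>(1 + lag_alpha n) * dl n k i j\<bar> \<le> real (k+i+1) * B"
  proof -
    have "\<bar>(1 + lag_alpha n) * dl n k i j\<bar> \<le> 1 * B"
      unfolding abs_mult B_def by (intro mult_mono Suc.IH alpha_bounds) auto
    also have "\<dots> \<le> real (k+i+1) * B" using B0 by (intro mult_right_mono) auto
    finally show ?thesis .
  qed
  have t3: "\<bar>(real_of_int (int k + j + 1) + lag_alpha n) * dl n k i (j+1)\<bar> \<le> real (k+i+1) * B"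
  proof (cases "j + 1 \<in> {- int i..int i}")
    case True
    then have "\<bar>real_of_int (int k + j + 1)\<bar> \<le> real (k+i)" by auto
    then have "\<bar>real_of_int (int k + j + 1) + lag_alpha n\<bar> \<le> real (k+i+1)"
      using alpha_bounds(1)[of n] by (simp add: abs_le_iff) linarith
    then show ?thesis unfolding abs_mult B_def
      by (intro mult_mono Suc.IH) auto
  next
    case False then show ?thesis using dl_supp[OF False] B0 by simp
  qed
  have "\<bar>dl n k (Suc i) j\<bar> \<le> (real n + 1) * (3 * (real (k+i+1) * B))"
  proof -
    have "\<bar>real n + 1\<bar> = real n + 1" by simp
    moreover have "\<bar>real_of_int (int k + j) * dl n k i (j - 1) -
      (1 + lag_alpha n) * dl n k i j -
      (real_of_int (int k + j + 1) + lag_alpha n) * dl n k i (j + 1)\<bar> \<le> 3 * (real (k+i+1) * B)"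
      using t1 t2 t3 by (simp add: abs_le_iff)
    ultimately show ?thesis unfolding dl.simps abs_mult by (simp add: mult_left_mono)
  qed
  also have "\<dots> = (3 * (real n + 1))^(Suc i) * fact (k + Suc i) / fact k"
    unfolding B_def by (simp add: algebra_simps)
  finally show ?case .
qed

lemma shift_sum:
  fixes f g :: "int \<Rightarrow> real" and c :: int
  assumes "finite B" "(\<lambda>j. j + c) ` A \<subseteq> B" "\<And>j. j \<notin> A \<Longrightarrow> f j = 0"
  shows "(\<Sum>j\<in>A. f j * g (j + c)) = (\<Sum>j\<in>B. f (j - c) * g j)"
proof -
  have inj: "inj_on (\<lambda>j. j + c) A" by (auto simp: inj_on_def)
  have "(\<Sum>j\<in>A. f j * g (j + c)) = (\<Sum>j\<in>(\<lambda>j. j + c) ` A. f (j - c) * g j)"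
    by (subst sum.reindex[OF inj]) simp
  also have "\<dots> = (\<Sum>j\<in>B. f (j - c) * g j)"
  proof (rule sum.mono_neutral_left[OF assms(1) assms(2)])
    show "\<forall>j\<in>B - (\<lambda>j. j + c) ` A. f (j - c) * g j = 0"
    proof
      fix j assume "j \<in> B - (\<lambda>j. j + c) ` A"
      then have "j - c \<notin> A" by (metis DiffD2 diff_add_cancel image_eqI)
      then show "f (j - c) * g j = 0" using assms(3) by simp
    qed
  qed
  finally show ?thesis .
qed

lemma euler_sum:
  fixes I :: "int set" and w :: "int \<Rightarrow> real"
  assumes "finite I"
  shows "euler_op (\<lambda>t. \<Sum>j\<in>I. w j * vfun n (int k + j) t) t
     = (\<Sum>j\<in>I. w j * euler_op (vfun n (int k + j)) t)"
proof -
  have "((\<lambda>t. \<Sum>j\<in>I. w j * vfun n (int k + j) t) has_real_derivative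
      (\<Sum>j\<in>I. w j * deriv (vfun n (int k + j)) t)) (at t)"
    by (intro DERIV_sum DERIV_cmult v_has_deriv)
  then show ?thesis unfolding euler_op_def
    by (simp add: DERIV_imp_deriv sum_distrib_left algebra_simps)
qed

lemma dl_formula:
  "(euler_op ^^ i) (vfun n (int k)) = (\<lambda>t. \<Sum>j\<in>{- int i..int i}. dl n k i j * vfun n (int k + j) t)"
proof (induction i)
  case 0
  show ?case by (simp add: fun_eq_iff)
next
  case (Suc i)
  show ?case
  proof
    fix t
    define N where "N = real n + 1"
    define a where "a = lag_alpha n"
    define g where "g j = vfun n (int k + j) t" for j
    define I where "I = {- int i..int i}"
    define J where "J = {- int (Suc i)..int (Suc i)}"
    have fJ: "finite J" unfolding J_def by simp
    have zI: "\<And>j. j \<notin> I \<Longrightarrow> dl n k i j = 0" unfolding I_def by (rule dl_supp)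
    have "(euler_op ^^ Suc i) (vfun n (int k)) t = euler_op (\<lambda>t. \<Sum>j\<in>I. dl n k i j * vfun n (int k + j) t) t"
      using Suc.IH unfolding I_def by simp
    also have "\<dots> = (\<Sum>j\<in>I. dl n k i j * euler_op (vfun n (int k + j)) t)"
      by (rule euler_sum) (simp add: I_def)
    also have "\<dots> = (\<Sum>j\<in>I. N * ((dl n k i j * (real_of_int (int k + j) + 1)) * g (j + 1))
        - N * (1 + a) * (dl n k i j * g j) - N * ((dl n k i j * (real_of_int (int k + j) + a)) * g (j + -1)))"
      unfolding v_euler g_def N_def a_def by (intro sum.cong refl) (simp add: algebra_simps)
    also have "\<dots> = N * (\<Sum>j\<in>I. (dl n k i j * (real_of_int (int k + j) + 1)) * g (j + 1))
        - N * (1 + a) * (\<Sum>j\<in>I. dl n k i j * g (j + 0)) - N * (\<Sum>j\<in>I. (dl n k i j * (real_of_int (int k + j) + a)) * g (j + -1))"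
      by (simp add: sum_subtractf sum_distrib_left)
    also have "\<dots> = N * (\<Sum>j\<in>J. (dl n k i (j - 1) * (real_of_int (int k + (j - 1)) + 1)) * g j)
        - N * (1 + a) * (\<Sum>j\<in>J. dl n k i (j - 0) * g j) - N * (\<Sum>j\<in>J. (dl n k i (j - -1) * (real_of_int (int k + (j - -1)) + a)) * g j)"
      by (subst shift_sum[OF fJ], (auto simp: I_def J_def zI)[2])+ (rule refl)
    also have "\<dots> = (\<Sum>j\<in>J. dl n k (Suc i) j * g j)"
      unfolding dl.simps N_def a_def
      by (simp add: sum_subtractf sum_distrib_left sum.distrib[symmetric] algebra_simps)
    finally show "(euler_op ^^ Suc i) (vfun n (int k)) t = (\<Sum>j\<in>{- int (Suc i)..int (Suc i)}. dl n k (Suc i) j * vfun n (int k + j) t)"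
      unfolding J_def g_def .
  qed
qed

lemma dl_formula2:
  "(\<Sum>j\<in>{- int i..int i}. dl n k i j * vfun n (int k + j) t)
   = (\<Sum>j\<in>{max (int k - int i) 0..int k + int i}. dl n k i (j - int k) * vfun n j t)"
proof -
  have "(\<Sum>j\<in>{- int i..int i}. dl n k i j * vfun n (int k + j) t)
      = (\<Sum>j\<in>{- int i..int i}. dl n k i j * (\<lambda>m. vfun n m t) (j + int k))"
    by (simp add: add.commute)
  also have "\<dots> = (\<Sum>j\<in>{int k - int i..int k + int i}. dl n k i (j - int k) * vfun n j t)"
    by (rule shift_sum) (auto intro: dl_supp)
  also have "\<dots> = (\<Sum>j\<in>{max (int k - int i) 0..int k + int i}. dl n k i (j - int k) * vfun n j t)"
    by (rule sum.mono_neutral_right) (auto simp: vfun_def)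
  finally show ?thesis .
qed

theorem lemma5p1:
  fixes n :: nat
  defines "\<alpha> \<equiv> lag_alpha n"
  shows
    "(\<forall>k::nat. k \<ge> 1 \<longrightarrow> (\<forall>t::real.
        euler_op (vfun n (int k)) t =
          (real n + 1) * ((real k + 1) * vfun n (int k + 1) t - (1 + \<alpha>) * vfun n (int k) t
                          - (real k + \<alpha>) * vfun n (int k - 1) t)))
   \<and> (\<forall>t::real. euler_op (vfun n 0) t = (real n + 1) * (vfun n 1 t - (1 + \<alpha>) * vfun n 0 t))
   \<and> (\<exists>C::real. C > 0 \<and>
        (\<forall>i k :: nat. \<exists>\<delta> :: int \<Rightarrow> real.
           (\<forall>t::real. (euler_op ^^ i) (vfun n (int k)) t
                = (\<Sum>j\<in>{- int i..int i}. \<delta> j * vfun n (int k + j) t)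
             \<and> (euler_op ^^ i) (vfun n (int k)) t
                = (\<Sum>j\<in>{max (int k - int i) 0..int k + int i}. \<delta> (j - int k) * vfun n j t))
         \<and> \<delta> (int i) = (real n + 1) ^ i * fact (k + i) / fact k
         \<and> (\<forall>j\<in>{- int i..int i}. \<bar>\<delta> j\<bar> \<le> C ^ i * fact (k + i) / fact k)))"
proof (intro conjI allI impI)
  fix k :: nat and t :: real
  show "euler_op (vfun n (int k)) t =
          (real n + 1) * ((real k + 1) * vfun n (int k + 1) t - (1 + \<alpha>) * vfun n (int k) t
                          - (real k + \<alpha>) * vfun n (int k - 1) t)"
    unfolding \<alpha>_def using v_euler[of n "int k" t] by simp
next
  fix t :: real
  show "euler_op (vfun n 0) t = (real n + 1) * (vfun n 1 t - (1 + \<alpha>) * vfun n 0 t)"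
    unfolding \<alpha>_def using v_euler[of n 0 t] by (simp add: vfun_def)
next
  show "\<exists>C::real. C > 0 \<and>
        (\<forall>i k :: nat. \<exists>\<delta> :: int \<Rightarrow> real.
           (\<forall>t::real. (euler_op ^^ i) (vfun n (int k)) t
                = (\<Sum>j\<in>{- int i..int i}. \<delta> j * vfun n (int k + j) t)
             \<and> (euler_op ^^ i) (vfun n (int k)) t
                = (\<Sum>j\<in>{max (int k - int i) 0..int k + int i}. \<delta> (j - int k) * vfun n j t))
         \<and> \<delta> (int i) = (real n + 1) ^ i * fact (k + i) / fact k
         \<and> (\<forall>j\<in>{- int i..int i}. \<bar>\<delta> j\<bar> \<le> C ^ i * fact (k + i) / fact k))"
  proof (intro exI[of _ "3 * (real n + 1)"] conjI allI)
    show "0 < 3 * (real n + 1)" by simp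
  next
    fix i k :: nat
    show "\<exists>\<delta> :: int \<Rightarrow> real.
           (\<forall>t::real. (euler_op ^^ i) (vfun n (int k)) t
                = (\<Sum>j\<in>{- int i..int i}. \<delta> j * vfun n (int k + j) t)
             \<and> (euler_op ^^ i) (vfun n (int k)) t
                = (\<Sum>j\<in>{max (int k - int i) 0..int k + int i}. \<delta> (j - int k) * vfun n j t))
         \<and> \<delta> (int i) = (real n + 1) ^ i * fact (k + i) / fact k
         \<and> (\<forall>j\<in>{- int i..int i}. \<bar>\<delta> j\<bar> \<le> (3 * (real n + 1)) ^ i * fact (k + i) / fact k)"
      by (intro exI[of _ "dl n k i"] conjI allI ballI dl_top dl_bound)
         (simp_all add: dl_formula dl_formula2)
  qed
qed

end
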